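(* Suppose $R<1$ and let $C\in\mathscr P_+$. Suppose $V^1$ is a subsolution and $V^2$ is a positive supersolution for the pair $(f_{EZ},C)$, that the pair $(V^1,V^2)$ satisfies Condition A for $(f_{EZ},C)$, and that there are $K,\gamma>0$ with $C_t^{1-R}\le Ke^{-\gamma t}(1-R)V^2_t$ for all $t\ge0$. Then $V^1_\sigma\le V^2_\sigma$ for all finite stopping times $\sigma\ge0$.
   Context: Work on a filtered probability space $(\Omega,\mathcal F,(\mathcal F_t)_{t\ge0},\mathbb P)$ with complete continuous filtration and trivial $\mathcal F_0$. $\mathscr P$ denotes progressively measurable processes and $\mathscr P_+$ nonnegative ones. Parameters $R,S\in(0,1)\cup(1,\infty)$ satisfy $\theta:=\frac{1-R}{1-S}>1$; $\rho:=\frac{\theta-1}{\theta}$. The Epstein--Zin aggregator is $f_{EZ}(c,v)=\frac{c^{1-S}}{1-S}((1-R)v)^{\rho}$ for $c\ge0$ and $v\in\mathbb V:=(1-R)[0,\infty)$. $\mathbb I(f_{EZ},C)=\{V\in\mathscr P:\mathbb E\int_0^\infty|f_{EZ}(C_s,V_s)|ds<\infty\}$ and $\mathbb{UI}(f_{EZ},C)$ is the set of its uniformly integrable elements. A $\mathbb V$-valued optional process $V$ with right limits $V_{t+}$ is a subsolution for $(f_{EZ},C)$ if $\limsup_{t\to\infty}\mathbb E[V_{t+}]\le0$ and $V_\sigma\le\mathbb E[V_{\tau+}+\int_\sigma^\tau f_{EZ}(C_s,V_s)ds\mid\mathcal F_\sigma]$ for all bounded stopping times $\sigma\le\tau$;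 it is a supersolution if $\liminf_{t\to\infty}\mathbb E[V_{t+}]\ge0$ and $V_\sigma\ge\mathbb E[V_{\tau+}+\int_\sigma^\tau f_{EZ}(C_s,V_s)ds\mid\mathcal F_\sigma]$ for all bounded stopping times $\sigma\le\tau$. The pair $(V^1,V^2)$ satisfies Condition A for $(f_{EZ},C)$ if either $V^1$ or $V^2$ belongs to $\mathbb{UI}(f_{EZ},C)$ and $(V^1-V^2)^+$ is bounded in $L^1$. *)

theory Defs
  imports "HOL-Probability.Probability"
begin

text \<open>A filtration on the probability space M, indexed by real times t \<ge> 0
  (values of F at negative times are irrelevant and unconstrained).\<close>
definition filtration_on :: "'a measure \<Rightarrow> (real \<Rightarrow> 'a measure) \<Rightarrow> bool" where
  "filtration_on M F \<longleftrightarrow>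
     (\<forall>t\<ge>0. space (F t) = space M \<and> sets (F t) \<subseteq> sets M) \<and>
     (\<forall>s t. 0 \<le> s \<longrightarrow> s \<le> t \<longrightarrow> sets (F s) \<subseteq> sets (F t))"

definition std_filtered_space :: "'a measure \<Rightarrow> (real \<Rightarrow> 'a measure) \<Rightarrow> bool" where
  "std_filtered_space M F \<longleftrightarrow>
     prob_space M \<and> filtration_on M F \<and>
     \<comment> \<open>completeness: F_0 contains all subsets of M-null sets\<close>
     (\<forall>N A. N \<in> null_sets M \<longrightarrow> A \<subseteq> N \<longrightarrow> A \<in> sets (F 0)) \<and>
     \<comment> \<open>right-continuity\<close>
     (\<forall>t\<ge>0. sets (F t) = {A. \<forall>s>t. A \<in> sets (F s)}) \<and>
     \<comment> \<open>left-continuity\<close>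
     (\<forall>t>0. sets (F t) = sigma_sets (space M) (\<Union>s\<in>{0..<t}. sets (F s))) \<and>
     \<comment> \<open>trivial F_0\<close>
     (\<forall>A\<in>sets (F 0). emeasure M A = 0 \<or> emeasure M A = 1)"

text \<open>(Finite, i.e. real-valued, nonnegative) stopping times.\<close>
definition stopping_time_on :: "'a measure \<Rightarrow> (real \<Rightarrow> 'a measure) \<Rightarrow> ('a \<Rightarrow> real) \<Rightarrow> bool" where
  "stopping_time_on M F T \<longleftrightarrow>
     (\<forall>\<omega>\<in>space M. 0 \<le> T \<omega>) \<and> (\<forall>t\<ge>0. {\<omega>\<in>space M. T \<omega> \<le> t} \<in> sets (F t))"

definition bounded_stopping_time :: "'a measure \<Rightarrow> (real \<Rightarrow> 'a measure) \<Rightarrow> ('a \<Rightarrow> real) \<Rightarrow> bool" where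
  "bounded_stopping_time M F T \<longleftrightarrow> stopping_time_on M F T \<and> (\<exists>B. \<forall>\<omega>\<in>space M. T \<omega> \<le> B)"

definition sigma_at :: "'a measure \<Rightarrow> (real \<Rightarrow> 'a measure) \<Rightarrow> ('a \<Rightarrow> real) \<Rightarrow> 'a measure" where
  "sigma_at M F T = sigma (space M)
     {A. A \<subseteq> space M \<and> (\<forall>t\<ge>0. {\<omega>\<in>A. T \<omega> \<le> t} \<in> sets (F t))}"

definition progressive :: "'a measure \<Rightarrow> (real \<Rightarrow> 'a measure) \<Rightarrow> (real \<Rightarrow> 'a \<Rightarrow> real) \<Rightarrow> bool" where
  "progressive M F X \<longleftrightarrow>
     (\<forall>t\<ge>0. (\<lambda>(s, \<omega>). X s \<omega>) \<in> (restrict_space borel {0..t} \<Otimes>\<^sub>M F t) \<rightarrow>\<^sub>M borel)"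

definition progressive_nonneg :: "'a measure \<Rightarrow> (real \<Rightarrow> 'a measure) \<Rightarrow> (real \<Rightarrow> 'a \<Rightarrow> real) \<Rightarrow> bool" where
  "progressive_nonneg M F X \<longleftrightarrow> progressive M F X \<and> (\<forall>t\<ge>0. \<forall>\<omega>\<in>space M. 0 \<le> X t \<omega>)"

definition optional_sigma :: "'a measure \<Rightarrow> (real \<Rightarrow> 'a measure) \<Rightarrow> (real \<times> 'a) measure" where
  "optional_sigma M F = sigma ({0..} \<times> space M)
     {{(t, \<omega>). 0 \<le> t \<and> \<omega> \<in> space M \<and> T \<omega> \<le> t} | T. stopping_time_on M F T}"

definition optional :: "'a measure \<Rightarrow> (real \<Rightarrow> 'a measure) \<Rightarrow> (real \<Rightarrow> 'a \<Rightarrow> real) \<Rightarrow> bool" where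
  "optional M F X \<longleftrightarrow> (\<lambda>(t, \<omega>). X t \<omega>) \<in> optional_sigma M F \<rightarrow>\<^sub>M borel"

definition has_right_limits :: "'a measure \<Rightarrow> (real \<Rightarrow> 'a \<Rightarrow> real) \<Rightarrow> bool" where
  "has_right_limits M X \<longleftrightarrow> (\<forall>\<omega>\<in>space M. \<forall>t\<ge>0. \<exists>L. ((\<lambda>s. X s \<omega>) \<longlongrightarrow> L) (at_right t))"

definition rlim :: "(real \<Rightarrow> 'a \<Rightarrow> real) \<Rightarrow> real \<Rightarrow> 'a \<Rightarrow> real" where
  "rlim X t \<omega> = Lim (at_right t) (\<lambda>s. X s \<omega>)"

definition gen_exp :: "'a measure \<Rightarrow> ('a \<Rightarrow> ereal) \<Rightarrow> ereal" where
  "gen_exp M X = enn2ereal (\<integral>\<^sup>+\<omega>. e2ennreal (X \<omega>) \<partial>M) - enn2ereal (\<integral>\<^sup>+\<omega>. e2ennreal (- X \<omega>) \<partial>M)"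

definition gen_cond_exp :: "'a measure \<Rightarrow> 'a measure \<Rightarrow> ('a \<Rightarrow> ereal) \<Rightarrow> 'a \<Rightarrow> ereal" where
  "gen_cond_exp M N X \<omega> =
     enn2ereal (nn_cond_exp M N (\<lambda>x. e2ennreal (X x)) \<omega>)
     - enn2ereal (nn_cond_exp M N (\<lambda>x. e2ennreal (- X x)) \<omega>)"

definition path_int :: "(real \<Rightarrow> real) \<Rightarrow> real \<Rightarrow> real \<Rightarrow> ereal" where
  "path_int g a b = enn2ereal (\<integral>\<^sup>+s\<in>{a..b}. ennreal (g s) \<partial>lborel)
                    - enn2ereal (\<integral>\<^sup>+s\<in>{a..b}. ennreal (- g s) \<partial>lborel)"

definition theta :: "real \<Rightarrow> real \<Rightarrow> real" where
  "theta R S = (1 - R) / (1 - S)"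

definition rho :: "real \<Rightarrow> real \<Rightarrow> real" where
  "rho R S = (theta R S - 1) / theta R S"

definition f_EZ :: "real \<Rightarrow> real \<Rightarrow> real \<Rightarrow> real \<Rightarrow> real" where
  "f_EZ R S c v = c powr (1 - S) / (1 - S) * ((1 - R) * v) powr (rho R S)"

definition EZ_params :: "real \<Rightarrow> real \<Rightarrow> bool" where
  "EZ_params R S \<longleftrightarrow> 0 < R \<and> R \<noteq> 1 \<and> 0 < S \<and> S \<noteq> 1 \<and> theta R S > 1"

definition VV :: "real \<Rightarrow> real set" where
  "VV R = {(1 - R) * x | x. 0 \<le> x}"

definition II :: "'a measure \<Rightarrow> (real \<Rightarrow> 'a measure) \<Rightarrow> real \<Rightarrow> real \<Rightarrow> (real \<Rightarrow> 'a \<Rightarrow> real)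
                  \<Rightarrow> (real \<Rightarrow> 'a \<Rightarrow> real) set" where
  "II M F R S C = {V. progressive M F V \<and>
     (\<integral>\<^sup>+\<omega>. (\<integral>\<^sup>+s\<in>{0..}. ennreal \<bar>f_EZ R S (C s \<omega>) (V s \<omega>)\<bar> \<partial>lborel) \<partial>M) < \<infinity>}"

definition unif_integrable :: "'a measure \<Rightarrow> (real \<Rightarrow> 'a \<Rightarrow> real) \<Rightarrow> bool" where
  "unif_integrable M X \<longleftrightarrow>
     (\<forall>t\<ge>0. integrable M (X t)) \<and>
     (\<forall>e>0. \<exists>K. \<forall>t\<ge>0.
        (\<integral>\<^sup>+\<omega>. ennreal \<bar>X t \<omega>\<bar> * indicator {\<omega>. K < \<bar>X t \<omega>\<bar>} \<omega> \<partial>M) < ennreal e)"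

definition UII :: "'a measure \<Rightarrow> (real \<Rightarrow> 'a measure) \<Rightarrow> real \<Rightarrow> real \<Rightarrow> (real \<Rightarrow> 'a \<Rightarrow> real)
                  \<Rightarrow> (real \<Rightarrow> 'a \<Rightarrow> real) set" where
  "UII M F R S C = {V \<in> II M F R S C. unif_integrable M V}"

definition is_VV_optional_rl :: "'a measure \<Rightarrow> (real \<Rightarrow> 'a measure) \<Rightarrow> real \<Rightarrow> (real \<Rightarrow> 'a \<Rightarrow> real) \<Rightarrow> bool" where
  "is_VV_optional_rl M F R V \<longleftrightarrow>
     optional M F V \<and> has_right_limits M V \<and> (\<forall>t\<ge>0. \<forall>\<omega>\<in>space M. V t \<omega> \<in> VV R)"

definition EZ_target :: "real \<Rightarrow> real \<Rightarrow> (real \<Rightarrow> 'a \<Rightarrow> real) \<Rightarrow> (real \<Rightarrow> 'a \<Rightarrow> real)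
                         \<Rightarrow> ('a \<Rightarrow> real) \<Rightarrow> ('a \<Rightarrow> real) \<Rightarrow> 'a \<Rightarrow> ereal" where
  "EZ_target R S C V \<sigma> \<tau> \<omega> =
     ereal (rlim V (\<tau> \<omega>) \<omega>) + path_int (\<lambda>s. f_EZ R S (C s \<omega>) (V s \<omega>)) (\<sigma> \<omega>) (\<tau> \<omega>)"

definition subsolution :: "'a measure \<Rightarrow> (real \<Rightarrow> 'a measure) \<Rightarrow> real \<Rightarrow> real
                           \<Rightarrow> (real \<Rightarrow> 'a \<Rightarrow> real) \<Rightarrow> (real \<Rightarrow> 'a \<Rightarrow> real) \<Rightarrow> bool" where
  "subsolution M F R S C V \<longleftrightarrow>
     is_VV_optional_rl M F R V \<and>
     Limsup at_top (\<lambda>t. gen_exp M (\<lambda>\<omega>. ereal (rlim V t \<omega>))) \<le> 0 \<and>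
     (\<forall>\<sigma> \<tau>. bounded_stopping_time M F \<sigma> \<longrightarrow> bounded_stopping_time M F \<tau> \<longrightarrow>
        (\<forall>\<omega>\<in>space M. \<sigma> \<omega> \<le> \<tau> \<omega>) \<longrightarrow>
        (AE \<omega> in M. ereal (V (\<sigma> \<omega>) \<omega>)
            \<le> gen_cond_exp M (sigma_at M F \<sigma>) (EZ_target R S C V \<sigma> \<tau>) \<omega>))"

definition supersolution :: "'a measure \<Rightarrow> (real \<Rightarrow> 'a measure) \<Rightarrow> real \<Rightarrow> real
                           \<Rightarrow> (real \<Rightarrow> 'a \<Rightarrow> real) \<Rightarrow> (real \<Rightarrow> 'a \<Rightarrow> real) \<Rightarrow> bool" where
  "supersolution M F R S C V \<longleftrightarrow>
     is_VV_optional_rl M F R V \<and>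
     Liminf at_top (\<lambda>t. gen_exp M (\<lambda>\<omega>. ereal (rlim V t \<omega>))) \<ge> 0 \<and>
     (\<forall>\<sigma> \<tau>. bounded_stopping_time M F \<sigma> \<longrightarrow> bounded_stopping_time M F \<tau> \<longrightarrow>
        (\<forall>\<omega>\<in>space M. \<sigma> \<omega> \<le> \<tau> \<omega>) \<longrightarrow>
        (AE \<omega> in M. ereal (V (\<sigma> \<omega>) \<omega>)
            \<ge> gen_cond_exp M (sigma_at M F \<sigma>) (EZ_target R S C V \<sigma> \<tau>) \<omega>))"

definition conditionA :: "'a measure \<Rightarrow> (real \<Rightarrow> 'a measure) \<Rightarrow> real \<Rightarrow> real \<Rightarrow> (real \<Rightarrow> 'a \<Rightarrow> real)
                          \<Rightarrow> (real \<Rightarrow> 'a \<Rightarrow> real) \<Rightarrow> (real \<Rightarrow> 'a \<Rightarrow> real) \<Rightarrow> bool" where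
  "conditionA M F R S C V1 V2 \<longleftrightarrow>
     (V1 \<in> UII M F R S C \<or> V2 \<in> UII M F R S C) \<and>
     (\<exists>B. \<forall>t\<ge>0. (\<integral>\<^sup>+\<omega>. ennreal (max 0 (V1 t \<omega> - V2 t \<omega>)) \<partial>M) \<le> ennreal B)"

end

theory Submission
  imports Defs
begin


lemma space_optional_sigma: "space (optional_sigma M F) = {0..} \<times> space M"
  unfolding optional_sigma_def by (rule space_measure_of) auto

lemma optional_measurable_comp:
  assumes opt: "optional M F V"
    and h: "h \<in> space N \<rightarrow> {0..} \<times> space M"
    and hT: "\<And>T. stopping_time_on M F T \<Longrightarrow> {x\<in>space N. T (snd (h x)) \<le> fst (h x)} \<in> sets N"
  shows "(\<lambda>x. V (fst (h x)) (snd (h x))) \<in> borel_measurable N"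
proof -
  have "h \<in> N \<rightarrow>\<^sub>M optional_sigma M F"
    unfolding optional_sigma_def
  proof (rule measurable_measure_of)
    show "{{(t, \<omega>). 0 \<le> t \<and> \<omega> \<in> space M \<and> T \<omega> \<le> t} | T. stopping_time_on M F T} \<subseteq> Pow ({0..} \<times> space M)"
      by auto
    show "h \<in> space N \<rightarrow> {0..} \<times> space M" by fact
    fix y assume "y \<in> {{(t, \<omega>). 0 \<le> t \<and> \<omega> \<in> space M \<and> T \<omega> \<le> t} | T. stopping_time_on M F T}"
    then obtain T where T: "stopping_time_on M F T" and y: "y = {(t, \<omega>). 0 \<le> t \<and> \<omega> \<in> space M \<and> T \<omega> \<le> t}"
      by auto
    have "h -` y \<inter> space N = {x\<in>space N. T (snd (h x)) \<le> fst (h x)}"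
      using h unfolding y by (auto simp: Pi_iff split: prod.splits)
    then show "h -` y \<inter> space N \<in> sets N" using hT[OF T] by simp
  qed
  from measurable_comp[OF this opt[unfolded optional_def]]
  show ?thesis by (simp add: comp_def case_prod_beta)
qed

lemma stopping_time_measurable:
  assumes "filtration_on M F" "stopping_time_on M F T"
  shows "T \<in> borel_measurable M"
proof (rule borel_measurableI_le)
  fix t
  show "{w \<in> space M. T w \<le> t} \<in> sets M"
  proof (cases "t \<ge> 0")
    case True
    then show ?thesis using assms unfolding filtration_on_def stopping_time_on_def by blast
  next
    case False
    then have "{w \<in> space M. T w \<le> t} = {}" using assms(2) unfolding stopping_time_on_def by force
    then show ?thesis by (metis sets.empty_sets)
  qed
qed

lemma optional_at_rv:
  assumes "filtration_on M F" "optional M F V" "\<sigma> \<in> borel_measurable M" "\<And>w. w \<in> space M \<Longrightarrow> 0 \<le> \<sigma> w"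
  shows "(\<lambda>w. V (\<sigma> w) w) \<in> borel_measurable M"
proof -
  have "(\<lambda>x. V (fst ((\<lambda>w. (\<sigma> w, w)) x)) (snd ((\<lambda>w. (\<sigma> w, w)) x))) \<in> borel_measurable M"
  proof (rule optional_measurable_comp[OF assms(2)])
    show "(\<lambda>w. (\<sigma> w, w)) \<in> space M \<rightarrow> {0..} \<times> space M" using assms(4) by auto
    fix T assume "stopping_time_on M F T"
    then have [measurable]: "T \<in> borel_measurable M" using stopping_time_measurable assms(1) by blast
    have [measurable]: "\<sigma> \<in> borel_measurable M" by fact
    show "{x \<in> space M. T (snd (\<sigma> x, x)) \<le> fst (\<sigma> x, x)} \<in> sets M" by simp
  qed
  then show ?thesis by simp
qed

definition RT :: "real \<Rightarrow> real measure" where "RT T = restrict_space lborel {0..T}"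

lemma space_RT[simp]: "space (RT T) = {0..T}" by (simp add: RT_def)

lemma optional_joint:
  assumes "filtration_on M F" "optional M F V"
  shows "(\<lambda>(w, s). V s w) \<in> borel_measurable (M \<Otimes>\<^sub>M RT T)"
proof -
  have "(\<lambda>x. V (fst ((\<lambda>(w,s). (s, w)) x)) (snd ((\<lambda>(w,s). (s, w)) x))) \<in> borel_measurable (M \<Otimes>\<^sub>M RT T)"
  proof (rule optional_measurable_comp[OF assms(2)])
    show "(\<lambda>(w,s). (s, w)) \<in> space (M \<Otimes>\<^sub>M RT T) \<rightarrow> {0..} \<times> space M"
      by (auto simp: space_pair_measure)
    fix T' assume "stopping_time_on M F T'"
    then have [measurable]: "T' \<in> borel_measurable M" using stopping_time_measurable assms(1) by blast
    have [measurable]: "snd \<in> borel_measurable (M \<Otimes>\<^sub>M RT T)"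
      by (rule measurable_compose[OF measurable_snd]) (simp add: RT_def measurable_restrict_space1)
    have m: "(\<lambda>x. T' (fst x) \<le> snd x) \<in> measurable (M \<Otimes>\<^sub>M RT T) (count_space UNIV)"
      by measurable
    have "{x \<in> space (M \<Otimes>\<^sub>M RT T). T' (snd ((\<lambda>(w,s). (s, w)) x)) \<le> fst ((\<lambda>(w,s). (s, w)) x)}
        = {x \<in> space (M \<Otimes>\<^sub>M RT T). T' (fst x) \<le> snd x}" by (auto simp: case_prod_beta)
    also have "\<dots> \<in> sets (M \<Otimes>\<^sub>M RT T)" using m by (simp add: pred_def)
    finally show "{x \<in> space (M \<Otimes>\<^sub>M RT T). T' (snd ((\<lambda>(w,s). (s, w)) x)) \<le> fst ((\<lambda>(w,s). (s, w)) x)} \<in> sets (M \<Otimes>\<^sub>M RT T)" .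
  qed
  then show ?thesis by (simp add: case_prod_beta)
qed

lemma progressive_joint:
  assumes "filtration_on M F" "progressive M F C" "0 \<le> T"
  shows "(\<lambda>(w, s). C s w) \<in> borel_measurable (M \<Otimes>\<^sub>M RT T)"
proof -
  have sp: "space (F T) = space M" and ss: "sets (F T) \<subseteq> sets M"
    using assms unfolding filtration_on_def by auto
  have C: "(\<lambda>(s, \<omega>). C s \<omega>) \<in> (restrict_space borel {0..T} \<Otimes>\<^sub>M F T) \<rightarrow>\<^sub>M borel"
    using assms unfolding progressive_def by auto
  have sw: "(\<lambda>(w,s). (s, w)) \<in> (M \<Otimes>\<^sub>M RT T) \<rightarrow>\<^sub>M (restrict_space borel {0..T} \<Otimes>\<^sub>M F T)"
  proof (rule measurable_pair_measureI)
    show "(\<lambda>(w,s). (s, w)) \<in> space (M \<Otimes>\<^sub>M RT T) \<rightarrow> space (restrict_space borel {0..T}) \<times> space (F T)"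
      using sp by (auto simp: space_pair_measure)
    fix A B assume A: "A \<in> sets (restrict_space borel {0..T})" and B: "B \<in> sets (F T)"
    have A': "A \<in> sets (RT T)" using A unfolding RT_def by (simp add: sets_restrict_space)
    have B': "B \<in> sets M" using B ss by auto
    have "(\<lambda>(w,s). (s, w)) -` (A \<times> B) \<inter> space (M \<Otimes>\<^sub>M RT T) = B \<times> A"
      using A' B' sets.sets_into_space[OF A'] sets.sets_into_space[OF B'] by (auto simp: space_pair_measure)
    then show "(\<lambda>(w,s). (s, w)) -` (A \<times> B) \<inter> space (M \<Otimes>\<^sub>M RT T) \<in> sets (M \<Otimes>\<^sub>M RT T)"
      using A' B' by simp
  qed
  from measurable_comp[OF sw C] show ?thesis by (simp add: comp_def case_prod_beta)
qed



lemma concave_powr_tangent: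
  fixes x y \<rho> :: real
  assumes "0 < \<rho>" "\<rho> < 1" "0 \<le> x" "0 < y"
  shows "x powr \<rho> \<le> y powr \<rho> + \<rho> * y powr (\<rho> - 1) * (x - y)"
proof -
  have "y powr \<rho> = y powr (1 + (\<rho> - 1))" by simp
  also have "\<dots> = y powr 1 * y powr (\<rho> - 1)" by (rule powr_add)
  finally have e2: "y * y powr (\<rho> - 1) = y powr \<rho>" using assms by simp
  have pos: "0 < y powr (\<rho> - 1)" using assms by simp
  show ?thesis
  proof (cases "x = 0")
    case True
    have "0 \<le> (1 - \<rho>) * y powr \<rho>" using assms by simp
    then show ?thesis using True e2 by (simp add: algebra_simps)
  next
    case False
    then have xp: "0 < x" using assms by simp
    have Y: "x powr \<rho> * y powr (1 - \<rho>) \<le> \<rho> * x + (1 - \<rho>) * y"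
      using Youngs_inequality_0[of \<rho> "1 - \<rho>" x y] assms xp by simp
    have e1: "y powr (1 - \<rho>) * y powr (\<rho> - 1) = 1"
      using assms by (simp add: powr_add[symmetric])
    have "x powr \<rho> = x powr \<rho> * y powr (1 - \<rho>) * y powr (\<rho> - 1)" using e1 by (simp add: mult.assoc)
    also have "\<dots> \<le> (\<rho> * x + (1 - \<rho>) * y) * y powr (\<rho> - 1)"
      using Y pos by (simp add: mult_right_mono)
    also have "\<dots> = y powr \<rho> + \<rho> * y powr (\<rho> - 1) * (x - y)"
      using e2 by (simp add: algebra_simps)
    finally show ?thesis .
  qed
qed

definition ell :: "real \<Rightarrow> real \<Rightarrow> real \<Rightarrow> real \<Rightarrow> real \<Rightarrow> real" where
  "ell R S K g t = (theta R S - 1) * K powr (1 / theta R S) * exp (- (g / theta R S) * t)"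

lemma ell_nonneg: "EZ_params R S \<Longrightarrow> 0 \<le> ell R S K g t"
  unfolding ell_def EZ_params_def by simp

lemma f_EZ_nonneg: "S < 1 \<Longrightarrow> 0 \<le> f_EZ R S c v"
  unfolding f_EZ_def by simp

lemma f_EZ_lip:
  assumes P: "EZ_params R S" and R1: "R < 1" and v1: "0 \<le> v1" and v2: "0 < v2" and c: "0 \<le> c"
    and K: "0 < K"
    and bnd: "c powr (1 - R) \<le> K * exp (- g * t) * ((1 - R) * v2)"
  shows "f_EZ R S c v1 \<le> f_EZ R S c v2 + ell R S K g t * max 0 (v1 - v2)"
proof -
  define th where "th = theta R S"
  define r where "r = rho R S"
  have th1: "th > 1" using P unfolding EZ_params_def th_def by simp
  have S1: "1 - S = (1 - R) / th" using P R1 unfolding th_def theta_def EZ_params_def by auto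
  have Sp: "0 < 1 - S" using S1 th1 R1 by simp
  have r_eq: "r = 1 - 1 / th" unfolding r_def rho_def th_def[symmetric] using th1 by (simp add: field_simps)
  have "0 < 1 / th" "1 / th < 1" using th1 by auto
  then have r0: "0 < r" "r < 1" using r_eq by auto
  define w1 where "w1 = (1 - R) * v1"
  define w2 where "w2 = (1 - R) * v2"
  have w1: "0 \<le> w1" using v1 R1 by (simp add: w1_def)
  have w2: "0 < w2" using v2 R1 by (simp add: w2_def)
  define k where "k = c powr (1 - S) / (1 - S)"
  have k0: "0 \<le> k" using Sp by (simp add: k_def)
  have fe: "\<And>v. f_EZ R S c v = k * ((1 - R) * v) powr r"
    unfolding f_EZ_def k_def r_def by simp
  have ell0: "0 \<le> ell R S K g t" using ell_nonneg[OF P] .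
  show ?thesis
  proof (cases "v1 \<le> v2")
    case True
    have "w1 powr r \<le> w2 powr r" using True R1 w1 r0 by (auto simp: w1_def w2_def intro!: powr_mono2)
    then have "f_EZ R S c v1 \<le> f_EZ R S c v2" unfolding fe w1_def w2_def using k0 by (simp add: mult_left_mono)
    moreover have "0 \<le> ell R S K g t * max 0 (v1 - v2)" using ell0 by simp
    ultimately show ?thesis by simp
  next
    case False
    have tang: "w1 powr r \<le> w2 powr r + r * w2 powr (r - 1) * (w1 - w2)"
      using concave_powr_tangent[OF r0 w1 w2] .
    have kb: "k * w2 powr (r - 1) \<le> K powr (1 / th) * exp (- (g / th) * t) / (1 - S)"
    proof (cases "c = 0")
      case True
      then show ?thesis using Sp K by (simp add: k_def)
    next
      case False
      then have cp: "0 < c" using c by simp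
      have "c powr (1 - S) = (c powr (1 - R)) powr (1 / th)"
        using S1 by (simp add: powr_powr)
      also have "\<dots> \<le> (K * exp (- g * t) * w2) powr (1 / th)"
        using bnd th1 cp by (intro powr_mono2) (auto simp: w2_def)
      also have "\<dots> = K powr (1 / th) * exp (- (g / th) * t) * w2 powr (1 / th)"
        using K w2 by (simp add: powr_mult exp_powr_real powr_def[of "exp _"])
      finally have cb: "c powr (1 - S) \<le> K powr (1 / th) * exp (- (g / th) * t) * w2 powr (1 / th)" .
      have "k * w2 powr (r - 1) = c powr (1 - S) * w2 powr (r - 1) / (1 - S)" by (simp add: k_def)
      also have "\<dots> \<le> K powr (1 / th) * exp (- (g / th) * t) * w2 powr (1 / th) * w2 powr (r - 1) / (1 - S)"
        using cb Sp w2 by (intro divide_right_mono mult_right_mono) auto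
      also have one: "w2 powr (1 / th) * w2 powr (r - 1) = 1"
        using w2 r_eq by (simp add: powr_add[symmetric])
      have "K powr (1 / th) * exp (- (g / th) * t) * w2 powr (1 / th) * w2 powr (r - 1) / (1 - S)
          = K powr (1 / th) * exp (- (g / th) * t) / (1 - S)"
        unfolding mult.assoc one by simp
      finally show ?thesis by simp
    qed
    have "f_EZ R S c v1 = k * w1 powr r" using fe w1_def by simp
    also have "\<dots> \<le> k * (w2 powr r + r * w2 powr (r - 1) * (w1 - w2))"
      using tang k0 by (simp add: mult_left_mono)
    also have "\<dots> = f_EZ R S c v2 + r * (1 - R) * (k * w2 powr (r - 1)) * (v1 - v2)"
      using fe w2_def by (simp add: w1_def w2_def algebra_simps)
    also have "\<dots> \<le> f_EZ R S c v2 + r * (1 - R) * (K powr (1 / th) * exp (- (g / th) * t) / (1 - S)) * (v1 - v2)"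
      using kb False r0 R1 by (intro add_left_mono mult_right_mono mult_left_mono) auto
    also have "r * (1 - R) * (K powr (1 / th) * exp (- (g / th) * t) / (1 - S)) = ell R S K g t"
    proof -
      have a1: "r * (1 - R) / (1 - S) = r * th"
        unfolding S1 using th1 R1 by (simp add: field_simps)
      have a2: "r * th = th - 1" unfolding r_eq using th1 by (simp add: field_simps)
      have a: "r * (1 - R) / (1 - S) = th - 1" using a1 a2 by simp
      have "r * (1 - R) * (K powr (1 / th) * exp (- (g / th) * t) / (1 - S))
          = (r * (1 - R) / (1 - S)) * (K powr (1 / th) * exp (- (g / th) * t))" by simp
      also have "\<dots> = ell R S K g t" unfolding a ell_def th_def by simp
      finally show ?thesis .
    qed
    finally show ?thesis using False by simp
  qed
qed


lemma rlim_tendsto: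
  assumes "has_right_limits M V" "0 \<le> t" "w \<in> space M"
  shows "((\<lambda>s. V s w) \<longlongrightarrow> rlim V t w) (at_right t)"
proof -
  obtain L where L: "((\<lambda>s. V s w) \<longlongrightarrow> L) (at_right t)"
    using assms unfolding has_right_limits_def by blast
  have "Lim (at_right t) (\<lambda>s. V s w) = L"
    using L by (intro tendsto_Lim) (simp_all add: trivial_limit_at_right_real)
  then show ?thesis using L by (simp add: rlim_def)
qed

lemma rlim_nonneg:
  assumes "has_right_limits M V" "0 \<le> t" "w \<in> space M" "\<And>s. 0 \<le> s \<Longrightarrow> 0 \<le> V s w"
  shows "0 \<le> rlim V t w"
proof (rule tendsto_lowerbound[OF rlim_tendsto[OF assms(1-3)]])
  show "\<forall>\<^sub>F s in at_right t. 0 \<le> V s w"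
    using eventually_at_right_less[of t] by (rule eventually_mono) (use assms(2,4) in auto)
qed (simp add: trivial_limit_at_right_real)
lemma const_stopping:
  assumes "filtration_on M F" "0 \<le> t"
  shows "bounded_stopping_time M F (\<lambda>_. t)"
  unfolding bounded_stopping_time_def stopping_time_on_def
proof safe
  fix s :: real assume s: "0 \<le> s"
  have sp: "space (F s) = space M" using assms s unfolding filtration_on_def by auto
  show "{w \<in> space M. t \<le> s} \<in> sets (F s)"
  proof (cases "t \<le> s")
    case True
    then have "{w \<in> space M. t \<le> s} = space (F s)" using sp by simp
    then show ?thesis by simp
  next
    case False
    then show ?thesis by simp
  qed
qed (use assms in auto)

lemma sigma_at_subalg:
  assumes "filtration_on M F" "stopping_time_on M F \<sigma>"
  shows "subalgebra M (sigma_at M F \<sigma>)"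
proof -
  let ?G = "{A. A \<subseteq> space M \<and> (\<forall>t\<ge>0. {\<omega>\<in>A. \<sigma> \<omega> \<le> t} \<in> sets (F t))}"
  have sp: "space (sigma_at M F \<sigma>) = space M"
    unfolding sigma_at_def by (rule space_measure_of) auto
  have G: "?G \<subseteq> sets M"
  proof
    fix A assume A: "A \<in> ?G"
    have "A \<subseteq> (\<Union>n::nat. {\<omega>\<in>A. \<sigma> \<omega> \<le> real n})"
    proof
      fix x assume "x \<in> A"
      moreover have "\<sigma> x \<le> real (nat \<lceil>\<sigma> x\<rceil>)" by (rule real_nat_ceiling_ge)
      ultimately show "x \<in> (\<Union>n::nat. {\<omega>\<in>A. \<sigma> \<omega> \<le> real n})" by blast
    qed
    then have eq: "A = (\<Union>n::nat. {\<omega>\<in>A. \<sigma> \<omega> \<le> real n})" by blast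
    have "{\<omega>\<in>A. \<sigma> \<omega> \<le> real n} \<in> sets M" for n
    proof -
      have "{\<omega>\<in>A. \<sigma> \<omega> \<le> real n} \<in> sets (F (real n))" using A by simp
      moreover have "sets (F (real n)) \<subseteq> sets M" using assms(1) unfolding filtration_on_def by simp
      ultimately show ?thesis by blast
    qed
    then have "(\<Union>n::nat. {\<omega>\<in>A. \<sigma> \<omega> \<le> real n}) \<in> sets M" by (intro sets.countable_UN) auto
    then show "A \<in> sets M" using eq by simp
  qed
  have "sets (sigma_at M F \<sigma>) = sigma_sets (space M) ?G"
    unfolding sigma_at_def by (rule sets_measure_of) auto
  also have "\<dots> \<subseteq> sets M" using G by (rule sets.sigma_sets_subset)
  finally show ?thesis unfolding subalgebra_def using sp by simp
qed

lemma sigma_at_fms: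
  assumes "prob_space M" "filtration_on M F" "stopping_time_on M F \<sigma>"
  shows "finite_measure_subalgebra M (sigma_at M F \<sigma>)"
proof -
  interpret prob_space M by fact
  show ?thesis unfolding finite_measure_subalgebra_def finite_measure_subalgebra_axioms_def
    using sigma_at_subalg[OF assms(2,3)] finite_measure_axioms by simp
qed
lemma rlim_measurable:
  assumes "filtration_on M F" "optional M F V" "has_right_limits M V" "0 \<le> t"
  shows "rlim V t \<in> borel_measurable M"
proof (rule borel_measurable_LIMSEQ_real)
  fix i :: nat
  have "0 \<le> t + inverse (real (Suc i))" using assms(4) by simp
  then show "(\<lambda>w. V (t + inverse (real (Suc i))) w) \<in> borel_measurable M"
    using optional_at_rv[OF assms(1,2), of "\<lambda>_. t + inverse (real (Suc i))"] by simp
next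
  fix w assume w: "w \<in> space M"
  have lim: "filterlim (\<lambda>i. t + inverse (real (Suc i))) (at_right t) sequentially"
  proof (rule tendsto_imp_filterlim_at_right)
    have "(\<lambda>i. inverse (real (Suc i))) \<longlonglongrightarrow> 0" by (rule LIMSEQ_inverse_real_of_nat)
    from tendsto_add[OF tendsto_const this, of t] show "(\<lambda>i. t + inverse (real (Suc i))) \<longlonglongrightarrow> t" by simp
    show "\<forall>\<^sub>F i in sequentially. t < t + inverse (real (Suc i))" by (intro always_eventually) simp
  qed
  show "(\<lambda>i. V (t + inverse (real (Suc i))) w) \<longlonglongrightarrow> rlim V t w"
    using filterlim_compose[OF rlim_tendsto[OF assms(3,4) w] lim] .
qed


lemma exp_tail_nn_integral:
  fixes K0 a t :: real
  assumes "0 \<le> K0" "0 < a"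
  shows "(\<integral>\<^sup>+ s. ennreal (K0 * exp (- a * s)) * indicator {t..} s \<partial>lborel) = ennreal (K0 * exp (- a * t) / a)"
proof -
  have "((\<lambda>x. exp (- a * x)) has_integral exp (- a * t) / a) {t..}"
    using has_integral_exp_minus_to_infinity[OF assms(2)] .
  then have "((\<lambda>x. K0 * exp (- a * x)) has_integral K0 * (exp (- a * t) / a)) {t..}"
    by (rule has_integral_mult_right)
  from nn_integral_has_integral_lebesgue'[OF _ this] assms show ?thesis by simp
qed

lemma gronwall_tail:
  fixes u :: "real \<Rightarrow> ennreal" and c \<delta> B :: real
  assumes d: "0 < \<delta>" and c: "0 \<le> c" and B: "0 \<le> B"
    and ub: "\<And>t. 0 \<le> t \<Longrightarrow> u t \<le> ennreal B"
    and G: "\<And>t. 0 \<le> t \<Longrightarrow> u t \<le> (\<integral>\<^sup>+ s. ennreal (c * exp (- \<delta> * s)) * u s * indicator {t..} s \<partial>lborel)"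
    and t: "0 \<le> t"
  shows "u t = 0"
proof -
  define x where "x = c / \<delta>"
  have x0: "0 \<le> x" using c d by (simp add: x_def)
  have P: "\<forall>t\<ge>0. u t \<le> ennreal (B * x ^ n / fact n * exp (- (real n * \<delta>) * t))" for n
  proof (induction n)
    case 0
    then show ?case using ub by simp
  next
    case (Suc n)
    show ?case
    proof (intro allI impI)
      fix t :: real assume t: "0 \<le> t"
      define K0 where "K0 = c * (B * x ^ n / fact n)"
      have K0: "0 \<le> K0" using c B x0 by (simp add: K0_def)
      have a: "0 < real (Suc n) * \<delta>" using d by simp
      have "u t \<le> (\<integral>\<^sup>+ s. ennreal (c * exp (- \<delta> * s)) * u s * indicator {t..} s \<partial>lborel)"
        using G[OF t] .
      also have "\<dots> \<le> (\<integral>\<^sup>+ s. ennreal (K0 * exp (- (real (Suc n) * \<delta>) * s)) * indicator {t..} s \<partial>lborel)"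
      proof (rule nn_integral_mono)
        fix s
        show "ennreal (c * exp (- \<delta> * s)) * u s * indicator {t..} s
              \<le> ennreal (K0 * exp (- (real (Suc n) * \<delta>) * s)) * indicator {t..} s"
        proof (cases "t \<le> s")
          case True
          then have "u s \<le> ennreal (B * x ^ n / fact n * exp (- (real n * \<delta>) * s))"
            using Suc.IH t by simp
          then have "ennreal (c * exp (- \<delta> * s)) * u s
              \<le> ennreal (c * exp (- \<delta> * s)) * ennreal (B * x ^ n / fact n * exp (- (real n * \<delta>) * s))"
            by (rule mult_left_mono) simp
          also have "\<dots> = ennreal (c * exp (- \<delta> * s) * (B * x ^ n / fact n * exp (- (real n * \<delta>) * s)))"
            by (rule ennreal_mult[symmetric]) (use c B x0 in auto)
          also have "c * exp (- \<delta> * s) * (B * x ^ n / fact n * exp (- (real n * \<delta>) * s))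
                   = K0 * exp (- (real (Suc n) * \<delta>) * s)"
            unfolding K0_def by (simp add: algebra_simps flip: exp_add)
          finally show ?thesis using True by simp
        qed simp
      qed
      also have "\<dots> = ennreal (K0 * exp (- (real (Suc n) * \<delta>) * t) / (real (Suc n) * \<delta>))"
        by (rule exp_tail_nn_integral[OF K0 a])
      also have "K0 * exp (- (real (Suc n) * \<delta>) * t) / (real (Suc n) * \<delta>)
          = B * x ^ Suc n / fact (Suc n) * exp (- (real (Suc n) * \<delta>) * t)"
        unfolding K0_def x_def using d by (simp add: field_simps)
      finally show "u t \<le> ennreal (B * x ^ Suc n / fact (Suc n) * exp (- (real (Suc n) * \<delta>) * t))" .
    qed
  qed
  have le: "u t \<le> ennreal (B * (x ^ n / fact n))" for n
  proof -
    have "u t \<le> ennreal (B * x ^ n / fact n * exp (- (real n * \<delta>) * t))" using P t by blast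
    also have "\<dots> \<le> ennreal (B * (x ^ n / fact n))"
    proof (rule ennreal_leI)
      have "exp (- (real n * \<delta>) * t) \<le> 1" using d t by simp
      moreover have "0 \<le> B * x ^ n / fact n" using B x0 by simp
      ultimately show "B * x ^ n / fact n * exp (- (real n * \<delta>) * t) \<le> B * (x ^ n / fact n)"
        using mult_left_mono[of "exp (- (real n * \<delta>) * t)" 1 "B * x ^ n / fact n"] by simp
    qed
    finally show ?thesis .
  qed
  have "summable (\<lambda>n. inverse (fact n) *\<^sub>R x ^ n)" by (rule summable_exp_generic)
  then have "(\<lambda>n. inverse (fact n) *\<^sub>R x ^ n) \<longlonglongrightarrow> 0" by (rule summable_LIMSEQ_zero)
  then have "(\<lambda>n. x ^ n / fact n) \<longlonglongrightarrow> 0" by (simp add: divide_inverse mult.commute)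
  then have "(\<lambda>n. B * (x ^ n / fact n)) \<longlonglongrightarrow> 0" using tendsto_mult_right_zero by blast
  then have "(\<lambda>n. ennreal (B * (x ^ n / fact n))) \<longlonglongrightarrow> ennreal 0" by (rule tendsto_ennrealI)
  then have "u t \<le> ennreal 0" by (rule LIMSEQ_le_const) (use le in blast)
  then show ?thesis by simp
qed


lemma set_int_RT:
  assumes "0 \<le> a"
  shows "(\<integral>\<^sup>+ s\<in>{a..T}. h s \<partial>lborel) = (\<integral>\<^sup>+ s. h s * indicator {a..T} s \<partial>RT T)"
proof -
  have "(\<integral>\<^sup>+ s. h s * indicator {a..T} s \<partial>RT T) = (\<integral>\<^sup>+ s. h s * indicator {a..T} s * indicator {0..T} s \<partial>lborel)"
    unfolding RT_def by (rule nn_integral_restrict_space) simp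
  also have "\<dots> = (\<integral>\<^sup>+ s\<in>{a..T}. h s \<partial>lborel)"
    using assms by (intro nn_integral_cong) (auto split: split_indicator)
  finally show ?thesis by simp
qed

lemma sigma_finite_RT: "sigma_finite_measure (RT T)"
  unfolding RT_def by (rule sigma_finite_measure_restrict_space) (auto simp: lborel.sigma_finite_measure_axioms)

lemma snd_meas_RT [measurable]: "snd \<in> borel_measurable (M \<Otimes>\<^sub>M RT T)"
  by (rule measurable_compose[OF measurable_snd]) (simp add: RT_def measurable_restrict_space1)

lemma int_RT_meas:
  assumes h: "(\<lambda>x. h (fst x) (snd x)) \<in> borel_measurable (M \<Otimes>\<^sub>M RT T)" and s: "\<sigma> \<in> borel_measurable M"
  shows "(\<lambda>w. \<integral>\<^sup>+ s. h w s * indicator {\<sigma> w..T} s \<partial>RT T) \<in> borel_measurable M"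
proof -
  interpret RT: sigma_finite_measure "RT T" by (rule sigma_finite_RT)
  have [measurable]: "(\<lambda>x. \<sigma> (fst x)) \<in> borel_measurable (M \<Otimes>\<^sub>M RT T)" using s by measurable
  have i: "(\<lambda>x. indicator {\<sigma> (fst x)..T} (snd x) :: ennreal) \<in> borel_measurable (M \<Otimes>\<^sub>M RT T)"
  proof -
    have "(\<lambda>x. if \<sigma> (fst x) \<le> snd x \<and> snd x \<le> T then 1 else 0 :: ennreal) \<in> borel_measurable (M \<Otimes>\<^sub>M RT T)"
      by measurable
    then show ?thesis by (simp add: indicator_def)
  qed
  have "(\<lambda>x. h (fst x) (snd x) * indicator {\<sigma> (fst x)..T} (snd x)) \<in> borel_measurable (M \<Otimes>\<^sub>M RT T)"
    using h i by (rule borel_measurable_times_ennreal)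
  then have "case_prod (\<lambda>w s. h w s * indicator {\<sigma> w..T} s) \<in> borel_measurable (M \<Otimes>\<^sub>M RT T)"
    by (simp add: case_prod_beta)
  then show ?thesis by (rule RT.borel_measurable_nn_integral)
qed



lemma ereal_step:
  fixes v1 v2 :: real and p1 n1 p2 q :: ennreal
  assumes "ereal v1 \<le> enn2ereal p1 - enn2ereal n1" "p1 \<le> p2 + q" "enn2ereal p2 - enn2ereal 0 \<le> ereal v2"
  shows "ennreal (max 0 (v1 - v2)) \<le> q"
proof -
  have a: "ereal v1 \<le> enn2ereal p1" using assms(1) ereal_diff_le_self[of "enn2ereal n1" "enn2ereal p1"] by simp
  have b: "enn2ereal p1 \<le> enn2ereal p2 + enn2ereal q"
    using assms(2) by (metis less_eq_ennreal.rep_eq plus_ennreal.rep_eq)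
  have z: "enn2ereal (0::ennreal) = 0" by (simp add: zero_ennreal.rep_eq)
  have c: "enn2ereal p2 \<le> ereal v2" using assms(3) unfolding z by simp
  have d: "ereal v1 \<le> ereal v2 + enn2ereal q" using a b c by (meson add_right_mono order_trans)
  have "enn2ereal (ennreal (max 0 (v1 - v2))) \<le> enn2ereal q"
  proof (cases "enn2ereal q")
    case (real r)
    then have "v1 - v2 \<le> r" "0 \<le> r" using d enn2ereal_nonneg[of q] by auto
    then have "max 0 (v1 - v2) \<le> r" by simp
    have "enn2ereal (ennreal (max 0 (v1 - v2))) = ereal (max 0 (v1 - v2))"
      by (rule enn2ereal_ennreal) simp
    then show ?thesis using \<open>max 0 (v1 - v2) \<le> r\<close> \<open>enn2ereal q = ereal r\<close> by simp
  qed (use enn2ereal_nonneg[of q] in auto)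
  then show ?thesis by (simp add: less_eq_ennreal.rep_eq)
qed



locale EZset =
  fixes M :: "'a measure" and F :: "real \<Rightarrow> 'a measure"
    and R S K g :: real and C V1 V2 :: "real \<Rightarrow> 'a \<Rightarrow> real"
  assumes std: "std_filtered_space M F"
    and par: "EZ_params R S"
    and R1: "R < 1"
    and Cn: "progressive_nonneg M F C"
    and sub: "subsolution M F R S C V1"
    and sup: "supersolution M F R S C V2"
    and pos: "\<forall>t\<ge>0. \<forall>\<omega>\<in>space M. 0 < V2 t \<omega>"
    and Kp: "0 < K" and gp: "0 < g"
    and bnd: "\<forall>t\<ge>0. \<forall>\<omega>\<in>space M. C t \<omega> powr (1 - R) \<le> K * exp (- g * t) * ((1 - R) * V2 t \<omega>)"
begin

lemma prob: "prob_space M" using std unfolding std_filtered_space_def by simp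
lemma filt: "filtration_on M F" using std unfolding std_filtered_space_def by simp

lemma S1: "S < 1"
proof (rule ccontr)
  assume "\<not> S < 1"
  then have "1 - S \<le> 0" by simp
  moreover have "1 - S \<noteq> 0" using par unfolding EZ_params_def by simp
  ultimately have "1 - S < 0" by simp
  moreover have "0 < 1 - R" using R1 by simp
  ultimately have "theta R S < 0" unfolding theta_def by (simp add: divide_pos_neg)
  then show False using par unfolding EZ_params_def by simp
qed

lemma opt1: "optional M F V1" and rl1: "has_right_limits M V1"
  using sub unfolding subsolution_def is_VV_optional_rl_def by auto
lemma opt2: "optional M F V2" and rl2: "has_right_limits M V2"
  using sup unfolding supersolution_def is_VV_optional_rl_def by auto

lemma V1_nn: "0 \<le> t \<Longrightarrow> w \<in> space M \<Longrightarrow> 0 \<le> V1 t w"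
proof -
  assume "0 \<le> t" "w \<in> space M"
  then have "V1 t w \<in> VV R" using sub unfolding subsolution_def is_VV_optional_rl_def by auto
  then obtain x where "V1 t w = (1 - R) * x" "0 \<le> x" unfolding VV_def by auto
  then show "0 \<le> V1 t w" using R1 by simp
qed

lemma V2_pos: "0 \<le> t \<Longrightarrow> w \<in> space M \<Longrightarrow> 0 < V2 t w" using pos by auto
lemma V2_nn: "0 \<le> t \<Longrightarrow> w \<in> space M \<Longrightarrow> 0 \<le> V2 t w" using V2_pos by (simp add: less_imp_le)

lemma Cprog: "progressive M F C" using Cn unfolding progressive_nonneg_def by simp
lemma C_nn: "0 \<le> t \<Longrightarrow> w \<in> space M \<Longrightarrow> 0 \<le> C t w" using Cn unfolding progressive_nonneg_def by simp

definition Dp :: "real \<Rightarrow> 'a \<Rightarrow> real" where "Dp t w = max 0 (V1 t w - V2 t w)"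

definition Ii :: "(real \<Rightarrow> 'a \<Rightarrow> real) \<Rightarrow> ('a \<Rightarrow> real) \<Rightarrow> real \<Rightarrow> 'a \<Rightarrow> ennreal" where
  "Ii V \<sigma> T w = (\<integral>\<^sup>+ s. ennreal (f_EZ R S (C s w) (V s w)) * indicator {\<sigma> w..T} s \<partial>RT T)"

definition Jj :: "('a \<Rightarrow> real) \<Rightarrow> real \<Rightarrow> 'a \<Rightarrow> ennreal" where
  "Jj \<sigma> T w = (\<integral>\<^sup>+ s. ennreal (ell R S K g s * Dp s w) * indicator {\<sigma> w..T} s \<partial>RT T)"

definition u :: "real \<Rightarrow> ennreal" where "u s = (\<integral>\<^sup>+ w. ennreal (Dp s w) \<partial>M)"

lemma target_decomp:
  assumes Vnn: "\<And>t w. 0 \<le> t \<Longrightarrow> w \<in> space M \<Longrightarrow> 0 \<le> V t w"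
    and w: "w \<in> space M" and s0: "0 \<le> \<sigma> w"
  shows "EZ_target R S C V \<sigma> (\<lambda>_. T) w = ereal (rlim V T w) + enn2ereal (Ii V \<sigma> T w)"
proof -
  have fnn: "\<And>s. 0 \<le> f_EZ R S (C s w) (V s w)" using f_EZ_nonneg[OF S1] by simp
  have z: "(\<integral>\<^sup>+ s\<in>{\<sigma> w..T}. ennreal (- f_EZ R S (C s w) (V s w)) \<partial>lborel) = 0"
    using fnn by (simp add: ennreal_neg)
  have "path_int (\<lambda>s. f_EZ R S (C s w) (V s w)) (\<sigma> w) T = enn2ereal (Ii V \<sigma> T w)"
    unfolding path_int_def z Ii_def set_int_RT[OF s0] by (simp add: zero_ennreal.rep_eq)
  then show ?thesis unfolding EZ_target_def by simp
qed

lemma joint_V: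
  assumes "optional M F V"
  shows "(\<lambda>x. V (snd x) (fst x)) \<in> borel_measurable (M \<Otimes>\<^sub>M RT T)"
  using optional_joint[OF filt assms, of T] by (simp add: case_prod_beta)

lemma joint_C:
  assumes "0 \<le> T"
  shows "(\<lambda>x. C (snd x) (fst x)) \<in> borel_measurable (M \<Otimes>\<^sub>M RT T)"
  using progressive_joint[OF filt Cprog assms] by (simp add: case_prod_beta)

lemma joint_f:
  assumes "optional M F V" "0 \<le> T"
  shows "(\<lambda>x. ennreal (f_EZ R S (C (snd x) (fst x)) (V (snd x) (fst x)))) \<in> borel_measurable (M \<Otimes>\<^sub>M RT T)"
proof -
  have [measurable]: "(\<lambda>x. V (snd x) (fst x)) \<in> borel_measurable (M \<Otimes>\<^sub>M RT T)" by (rule joint_V[OF assms(1)])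
  have [measurable]: "(\<lambda>x. C (snd x) (fst x)) \<in> borel_measurable (M \<Otimes>\<^sub>M RT T)" by (rule joint_C[OF assms(2)])
  show ?thesis unfolding f_EZ_def by measurable
qed

lemma joint_J:
  assumes "0 \<le> T"
  shows "(\<lambda>x. ennreal (ell R S K g (snd x) * Dp (snd x) (fst x))) \<in> borel_measurable (M \<Otimes>\<^sub>M RT T)"
proof -
  have [measurable]: "(\<lambda>x. V1 (snd x) (fst x)) \<in> borel_measurable (M \<Otimes>\<^sub>M RT T)" by (rule joint_V[OF opt1])
  have [measurable]: "(\<lambda>x. V2 (snd x) (fst x)) \<in> borel_measurable (M \<Otimes>\<^sub>M RT T)" by (rule joint_V[OF opt2])
  show ?thesis unfolding ell_def Dp_def by measurable
qed

lemma Ii_meas: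
  assumes "optional M F V" "0 \<le> T" "\<sigma> \<in> borel_measurable M"
  shows "Ii V \<sigma> T \<in> borel_measurable M"
  unfolding Ii_def
  by (rule int_RT_meas[where h="\<lambda>w s. ennreal (f_EZ R S (C s w) (V s w))", OF _ assms(3)])
     (use joint_f[OF assms(1,2)] in simp)

lemma Jj_meas:
  assumes "0 \<le> T" "\<sigma> \<in> borel_measurable M"
  shows "Jj \<sigma> T \<in> borel_measurable M"
  unfolding Jj_def
  by (rule int_RT_meas[where h="\<lambda>w s. ennreal (ell R S K g s * Dp s w)", OF _ assms(2)])
     (use joint_J[OF assms(1)] in simp)

end


context EZset begin

lemma ind_RT_meas: "(\<lambda>s. indicator {a..b} s :: ennreal) \<in> borel_measurable (RT T)"
  unfolding RT_def by (intro measurable_restrict_space1) simp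

lemma sec_f:
  assumes "optional M F V" "0 \<le> T" "w \<in> space M"
  shows "(\<lambda>s. ennreal (f_EZ R S (C s w) (V s w)) * indicator {a..T} s) \<in> borel_measurable (RT T)"
proof -
  have "(\<lambda>s. ennreal (f_EZ R S (C s w) (V s w))) \<in> borel_measurable (RT T)"
    using measurable_Pair2[OF joint_f[OF assms(1,2)] assms(3)] by simp
  then show ?thesis using ind_RT_meas by (rule borel_measurable_times_ennreal)
qed

lemma sec_J:
  assumes "0 \<le> T" "w \<in> space M"
  shows "(\<lambda>s. ennreal (ell R S K g s * Dp s w) * indicator {a..T} s) \<in> borel_measurable (RT T)"
proof -
  have "(\<lambda>s. ennreal (ell R S K g s * Dp s w)) \<in> borel_measurable (RT T)"
    using measurable_Pair2[OF joint_J[OF assms(1)] assms(2)] by simp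
  then show ?thesis using ind_RT_meas by (rule borel_measurable_times_ennreal)
qed

lemma I_le:
  assumes T: "0 \<le> T" and w: "w \<in> space M"
  shows "Ii V1 \<sigma> T w \<le> Ii V2 \<sigma> T w + Jj \<sigma> T w"
proof -
  have "Ii V1 \<sigma> T w \<le> (\<integral>\<^sup>+ s. (ennreal (f_EZ R S (C s w) (V2 s w)) * indicator {\<sigma> w..T} s
       + ennreal (ell R S K g s * Dp s w) * indicator {\<sigma> w..T} s) \<partial>RT T)"
    unfolding Ii_def
  proof (rule nn_integral_mono)
    fix s assume "s \<in> space (RT T)"
    then have s: "0 \<le> s" by simp
    have h1: "f_EZ R S (C s w) (V1 s w) \<le> f_EZ R S (C s w) (V2 s w) + ell R S K g s * max 0 (V1 s w - V2 s w)"
      by (rule f_EZ_lip[OF par R1 V1_nn[OF s w] V2_pos[OF s w] C_nn[OF s w] Kp]) (use bnd s w in auto)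
    have h2: "0 \<le> ell R S K g s * max 0 (V1 s w - V2 s w)" using ell_nonneg[OF par] by simp
    have h3: "0 \<le> f_EZ R S (C s w) (V2 s w)" by (rule f_EZ_nonneg[OF S1])
    have "ennreal (f_EZ R S (C s w) (V1 s w)) \<le> ennreal (f_EZ R S (C s w) (V2 s w) + ell R S K g s * max 0 (V1 s w - V2 s w))"
      using h1 by (rule ennreal_leI)
    also have "\<dots> = ennreal (f_EZ R S (C s w) (V2 s w)) + ennreal (ell R S K g s * max 0 (V1 s w - V2 s w))"
      by (rule ennreal_plus[OF h3 h2])
    finally have "ennreal (f_EZ R S (C s w) (V1 s w)) \<le> ennreal (f_EZ R S (C s w) (V2 s w)) + ennreal (ell R S K g s * Dp s w)"
      unfolding Dp_def .
    then show "ennreal (f_EZ R S (C s w) (V1 s w)) * indicator {\<sigma> w..T} s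
        \<le> ennreal (f_EZ R S (C s w) (V2 s w)) * indicator {\<sigma> w..T} s + ennreal (ell R S K g s * Dp s w) * indicator {\<sigma> w..T} s"
      by (auto split: split_indicator)
  qed
  also have "\<dots> = Ii V2 \<sigma> T w + Jj \<sigma> T w"
    unfolding Ii_def Jj_def
    by (rule nn_integral_add[OF sec_f[OF opt2 T w] sec_J[OF T w]])
  finally show ?thesis .
qed

lemma step:
  assumes st: "stopping_time_on M F \<sigma>" and T: "0 \<le> T" and le: "\<forall>w\<in>space M. \<sigma> w \<le> T"
  shows "(\<integral>\<^sup>+w. ennreal (Dp (\<sigma> w) w) \<partial>M)
     \<le> (\<integral>\<^sup>+w. ennreal (max 0 (rlim V1 T w - rlim V2 T w)) \<partial>M) + (\<integral>\<^sup>+w. Jj \<sigma> T w \<partial>M)"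
proof -
  let ?N = "sigma_at M F \<sigma>"
  let ?E = "nn_cond_exp M ?N"
  have sm[measurable]: "\<sigma> \<in> borel_measurable M" by (rule stopping_time_measurable[OF filt st])
  have s0: "\<And>w. w \<in> space M \<Longrightarrow> 0 \<le> \<sigma> w" using st unfolding stopping_time_on_def by simp
  interpret N: finite_measure_subalgebra M ?N by (rule sigma_at_fms[OF prob filt st])
  have bs: "bounded_stopping_time M F \<sigma>" using st le unfolding bounded_stopping_time_def by blast
  have bT: "bounded_stopping_time M F (\<lambda>_. T)" by (rule const_stopping[OF filt T])
  have le': "\<forall>w\<in>space M. \<sigma> w \<le> (\<lambda>_. T) w" using le by simp
  define X1 where "X1 = EZ_target R S C V1 \<sigma> (\<lambda>_. T)"
  define X2 where "X2 = EZ_target R S C V2 \<sigma> (\<lambda>_. T)"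
  have AE1: "AE w in M. ereal (V1 (\<sigma> w) w) \<le> gen_cond_exp M ?N X1 w"
    using sub bs bT le' unfolding subsolution_def X1_def by blast
  have AE2: "AE w in M. ereal (V2 (\<sigma> w) w) \<ge> gen_cond_exp M ?N X2 w"
    using sup bs bT le' unfolding supersolution_def X2_def by blast
  define P1 where "P1 w = ennreal (rlim V1 T w) + Ii V1 \<sigma> T w" for w
  define P2 where "P2 w = ennreal (rlim V2 T w) + Ii V2 \<sigma> T w" for w
  define Q where "Q w = ennreal (max 0 (rlim V1 T w - rlim V2 T w)) + Jj \<sigma> T w" for w
  have r1m[measurable]: "rlim V1 T \<in> borel_measurable M" by (rule rlim_measurable[OF filt opt1 rl1 T])
  have r2m[measurable]: "rlim V2 T \<in> borel_measurable M" by (rule rlim_measurable[OF filt opt2 rl2 T])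
  have [measurable]: "Ii V1 \<sigma> T \<in> borel_measurable M" by (rule Ii_meas[OF opt1 T sm])
  have [measurable]: "Ii V2 \<sigma> T \<in> borel_measurable M" by (rule Ii_meas[OF opt2 T sm])
  have [measurable]: "Jj \<sigma> T \<in> borel_measurable M" by (rule Jj_meas[OF T sm])
  have P1m[measurable]: "P1 \<in> borel_measurable M" unfolding P1_def by measurable
  have P2m[measurable]: "P2 \<in> borel_measurable M" unfolding P2_def by measurable
  have Qm[measurable]: "Q \<in> borel_measurable M" unfolding Q_def by measurable
  have r1n: "\<And>w. w \<in> space M \<Longrightarrow> 0 \<le> rlim V1 T w"
    using rlim_nonneg[OF rl1 T] V1_nn by blast
  have r2n: "\<And>w. w \<in> space M \<Longrightarrow> 0 \<le> rlim V2 T w"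
    using rlim_nonneg[OF rl2 T] V2_nn by blast
  have X1e: "\<And>w. w \<in> space M \<Longrightarrow> X1 w = enn2ereal (P1 w)"
    unfolding X1_def P1_def using target_decomp[OF V1_nn _ s0] r1n
    by (simp add: plus_ennreal.rep_eq)
  have X2e: "\<And>w. w \<in> space M \<Longrightarrow> X2 w = enn2ereal (P2 w)"
    unfolding X2_def P2_def using target_decomp[OF V2_nn _ s0] r2n
    by (simp add: plus_ennreal.rep_eq)
  have X1p: "AE w in M. ?E (\<lambda>x. e2ennreal (X1 x)) w = ?E P1 w"
  proof (rule N.nn_cond_exp_cong)
    show "AE w in M. e2ennreal (X1 w) = P1 w" using X1e by (intro AE_I2) simp
    show "(\<lambda>x. e2ennreal (X1 x)) \<in> borel_measurable M"
      using P1m by (rule measurable_cong[THEN iffD1, rotated]) (simp add: X1e)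
  qed (rule P1m)
  have X2p: "AE w in M. ?E (\<lambda>x. e2ennreal (X2 x)) w = ?E P2 w"
  proof (rule N.nn_cond_exp_cong)
    show "AE w in M. e2ennreal (X2 w) = P2 w" using X2e by (intro AE_I2) simp
    show "(\<lambda>x. e2ennreal (X2 x)) \<in> borel_measurable M"
      using P2m by (rule measurable_cong[THEN iffD1, rotated]) (simp add: X2e)
  qed (rule P2m)
  have X2n: "AE w in M. ?E (\<lambda>x. e2ennreal (- X2 x)) w = 0"
  proof -
    have z: "\<And>w. w \<in> space M \<Longrightarrow> e2ennreal (- X2 w) = 0"
      using X2e by (simp add: e2ennreal_neg)
    have a: "AE w in M. ?E (\<lambda>x. e2ennreal (- X2 x)) w = ?E (\<lambda>_. 0) w"
    proof (rule N.nn_cond_exp_cong)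
      show "AE w in M. e2ennreal (- X2 w) = 0" using z by (intro AE_I2) simp
      show "(\<lambda>x. e2ennreal (- X2 x)) \<in> borel_measurable M"
        by (rule measurable_cong[THEN iffD1, rotated, of "\<lambda>_. 0"]) (simp_all add: z)
    qed simp
    have b: "AE w in M. (\<lambda>_. 0::ennreal) w = ?E (\<lambda>_. 0) w"
      by (rule N.nn_cond_exp_F_meas) simp
    show ?thesis using a b by eventually_elim simp
  qed
  have c3: "AE w in M. ?E P1 w \<le> ?E (\<lambda>x. P2 x + Q x) w"
  proof (rule N.nn_cond_exp_mono)
    show "AE w in M. P1 w \<le> P2 w + Q w"
    proof (intro AE_I2)
      fix w assume w: "w \<in> space M"
      have a0: "ennreal (rlim V2 T w) + ennreal (max 0 (rlim V1 T w - rlim V2 T w))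
          = ennreal (rlim V2 T w + max 0 (rlim V1 T w - rlim V2 T w))"
        using r2n[OF w] by (intro ennreal_plus[symmetric]) auto
      have "ennreal (rlim V1 T w) \<le> ennreal (rlim V2 T w + max 0 (rlim V1 T w - rlim V2 T w))"
        by (rule ennreal_leI) simp
      then have a: "ennreal (rlim V1 T w) \<le> ennreal (rlim V2 T w) + ennreal (max 0 (rlim V1 T w - rlim V2 T w))"
        using a0 by simp
      have b: "Ii V1 \<sigma> T w \<le> Ii V2 \<sigma> T w + Jj \<sigma> T w" by (rule I_le[OF T w])
      have "P1 w \<le> (ennreal (rlim V2 T w) + ennreal (max 0 (rlim V1 T w - rlim V2 T w))) + (Ii V2 \<sigma> T w + Jj \<sigma> T w)"
        unfolding P1_def using a b by (rule add_mono)
      then show "P1 w \<le> P2 w + Q w" unfolding P2_def Q_def by (simp add: ac_simps)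
    qed
  qed simp_all
  have c4: "AE w in M. ?E P2 w + ?E Q w = ?E (\<lambda>x. P2 x + Q x) w"
    by (rule N.nn_cond_exp_sum) simp_all
  have key: "AE w in M. ennreal (Dp (\<sigma> w) w) \<le> ?E Q w"
    using AE1 AE2 X1p X2p X2n c3 c4
  proof eventually_elim
    case (elim w)
    have h1: "ereal (V1 (\<sigma> w) w) \<le> enn2ereal (?E P1 w) - enn2ereal (?E (\<lambda>x. e2ennreal (- X1 x)) w)"
      using elim(1) elim(3) unfolding gen_cond_exp_def by simp
    have h3: "enn2ereal (?E P2 w) - enn2ereal 0 \<le> ereal (V2 (\<sigma> w) w)"
      using elim(2) elim(4) elim(5) unfolding gen_cond_exp_def by simp
    have h2: "?E P1 w \<le> ?E P2 w + ?E Q w" using elim(6) elim(7) by simp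
    show ?case unfolding Dp_def by (rule ereal_step[OF h1 h2 h3])
  qed
  have "(\<integral>\<^sup>+w. ennreal (Dp (\<sigma> w) w) \<partial>M) \<le> (\<integral>\<^sup>+w. ?E Q w \<partial>M)"
    by (rule nn_integral_mono_AE[OF key])
  also have "\<dots> = (\<integral>\<^sup>+w. Q w \<partial>M)"
    using N.nn_cond_exp_intg[of "\<lambda>_. 1" Q] by simp
  also have "\<dots> = (\<integral>\<^sup>+w. ennreal (max 0 (rlim V1 T w - rlim V2 T w)) \<partial>M) + (\<integral>\<^sup>+w. Jj \<sigma> T w \<partial>M)"
    unfolding Q_def by (rule nn_integral_add) simp_all
  finally show ?thesis .
qed

end


context EZset begin

lemma Dp_meas: "0 \<le> s \<Longrightarrow> (\<lambda>w. ennreal (Dp s w)) \<in> borel_measurable M"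
proof -
  assume s: "0 \<le> s"
  have [measurable]: "V1 s \<in> borel_measurable M" using optional_at_rv[OF filt opt1, of "\<lambda>_. s"] s by simp
  have [measurable]: "V2 s \<in> borel_measurable M" using optional_at_rv[OF filt opt2, of "\<lambda>_. s"] s by simp
  show ?thesis unfolding Dp_def by measurable
qed

lemma J_bound:
  assumes T: "0 \<le> T" and t0: "0 \<le> t0" and le: "\<forall>w\<in>space M. t0 \<le> \<sigma> w"
  shows "(\<integral>\<^sup>+w. Jj \<sigma> T w \<partial>M) \<le> (\<integral>\<^sup>+ s. ennreal (ell R S K g s) * u s * indicator {t0..} s \<partial>lborel)"
proof -
  interpret RT: sigma_finite_measure "RT T" by (rule sigma_finite_RT)
  interpret P: pair_sigma_finite M "RT T"
    using prob RT.sigma_finite_measure_axioms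
    by (simp add: pair_sigma_finite_def prob_space_imp_sigma_finite)
  have jm: "case_prod (\<lambda>w s. ennreal (ell R S K g s * Dp s w) * indicator {t0..T} s) \<in> borel_measurable (M \<Otimes>\<^sub>M RT T)"
  proof -
    have [measurable]: "(\<lambda>x. ennreal (ell R S K g (snd x) * Dp (snd x) (fst x))) \<in> borel_measurable (M \<Otimes>\<^sub>M RT T)"
      by (rule joint_J[OF T])
    have "(\<lambda>x. ennreal (ell R S K g (snd x) * Dp (snd x) (fst x)) * indicator {t0..T} (snd x)) \<in> borel_measurable (M \<Otimes>\<^sub>M RT T)"
      by measurable
    then show ?thesis by (simp add: case_prod_beta)
  qed
  have "(\<integral>\<^sup>+w. Jj \<sigma> T w \<partial>M) \<le> (\<integral>\<^sup>+w. (\<integral>\<^sup>+ s. ennreal (ell R S K g s * Dp s w) * indicator {t0..T} s \<partial>RT T) \<partial>M)"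
    unfolding Jj_def
  proof (rule nn_integral_mono, rule nn_integral_mono)
    fix w s assume w: "w \<in> space M"
    show "ennreal (ell R S K g s * Dp s w) * indicator {\<sigma> w..T} s \<le> ennreal (ell R S K g s * Dp s w) * indicator {t0..T} s"
      using le w by (auto split: split_indicator)
  qed
  also have "\<dots> = (\<integral>\<^sup>+ s. (\<integral>\<^sup>+w. ennreal (ell R S K g s * Dp s w) * indicator {t0..T} s \<partial>M) \<partial>RT T)"
    by (rule P.Fubini'[OF jm, symmetric])
  also have "\<dots> = (\<integral>\<^sup>+ s. ennreal (ell R S K g s) * u s * indicator {t0..T} s \<partial>RT T)"
  proof (rule nn_integral_cong)
    fix s assume "s \<in> space (RT T)"
    then have s: "0 \<le> s" by simp
    have "(\<integral>\<^sup>+w. ennreal (ell R S K g s * Dp s w) * indicator {t0..T} s \<partial>M)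
        = (\<integral>\<^sup>+w. (ennreal (ell R S K g s) * indicator {t0..T} s) * ennreal (Dp s w) \<partial>M)"
      using ell_nonneg[OF par] by (intro nn_integral_cong) (simp add: ennreal_mult Dp_def ac_simps)
    also have "\<dots> = ennreal (ell R S K g s) * indicator {t0..T} s * u s"
      unfolding u_def by (rule nn_integral_cmult[OF Dp_meas[OF s]])
    finally show "(\<integral>\<^sup>+w. ennreal (ell R S K g s * Dp s w) * indicator {t0..T} s \<partial>M) = ennreal (ell R S K g s) * u s * indicator {t0..T} s"
      by (simp add: ac_simps)
  qed
  also have "\<dots> = (\<integral>\<^sup>+ s. ennreal (ell R S K g s) * u s * indicator {t0..T} s * indicator {0..T} s \<partial>lborel)"
    unfolding RT_def by (rule nn_integral_restrict_space) simp
  also have "\<dots> \<le> (\<integral>\<^sup>+ s. ennreal (ell R S K g s) * u s * indicator {t0..} s \<partial>lborel)"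
    by (rule nn_integral_mono) (auto split: split_indicator)
  finally show ?thesis .
qed

definition b :: "real \<Rightarrow> ennreal" where "b T = (\<integral>\<^sup>+w. ennreal (rlim V1 T w) \<partial>M)"
definition G :: "real \<Rightarrow> ennreal" where "G t = (\<integral>\<^sup>+ s. ennreal (ell R S K g s) * u s * indicator {t..} s \<partial>lborel)"

lemma a_le_b:
  assumes T: "0 \<le> T"
  shows "(\<integral>\<^sup>+w. ennreal (max 0 (rlim V1 T w - rlim V2 T w)) \<partial>M) \<le> b T"
  unfolding b_def
proof (rule nn_integral_mono)
  fix w assume w: "w \<in> space M"
  have "0 \<le> rlim V2 T w" using rlim_nonneg[OF rl2 T w] V2_nn w by blast
  moreover have "0 \<le> rlim V1 T w" using rlim_nonneg[OF rl1 T w] V1_nn w by blast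
  ultimately show "ennreal (max 0 (rlim V1 T w - rlim V2 T w)) \<le> ennreal (rlim V1 T w)"
    by (intro ennreal_leI) simp
qed

lemma u_le:
  assumes t: "0 \<le> t" and tT: "t \<le> T"
  shows "u t \<le> b T + G t"
proof -
  have T: "0 \<le> T" using t tT by simp
  have st: "stopping_time_on M F (\<lambda>_. t)" using const_stopping[OF filt t] unfolding bounded_stopping_time_def by simp
  have "u t \<le> (\<integral>\<^sup>+w. ennreal (max 0 (rlim V1 T w - rlim V2 T w)) \<partial>M) + (\<integral>\<^sup>+w. Jj (\<lambda>_. t) T w \<partial>M)"
    using step[OF st T] tT unfolding u_def by simp
  also have "\<dots> \<le> b T + G t"
    unfolding G_def by (intro add_mono a_le_b[OF T] J_bound[OF T t]) simp
  finally show ?thesis .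
qed

lemma b_small:
  assumes e: "0 < e"
  shows "\<forall>\<^sub>F T in at_top. b T < ennreal e"
proof -
  have L: "Limsup at_top (\<lambda>t. gen_exp M (\<lambda>\<omega>. ereal (rlim V1 t \<omega>))) \<le> 0"
    using sub unfolding subsolution_def by simp
  then have "\<forall>\<^sub>F t in at_top. gen_exp M (\<lambda>\<omega>. ereal (rlim V1 t \<omega>)) < ereal e"
    using e by (intro Limsup_lessD) (meson L ereal_less(2) le_less_trans e)
  moreover have "\<forall>\<^sub>F t in at_top. (0::real) \<le> t" by (rule eventually_ge_at_top)
  ultimately show ?thesis
  proof eventually_elim
    case (elim t)
    have z: "(\<integral>\<^sup>+w. e2ennreal (- ereal (rlim V1 t w)) \<partial>M) = 0"
    proof -
      have "(\<integral>\<^sup>+w. e2ennreal (- ereal (rlim V1 t w)) \<partial>M) = (\<integral>\<^sup>+w. 0 \<partial>M)"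
      proof (rule nn_integral_cong)
        fix w assume w: "w \<in> space M"
        have "0 \<le> rlim V1 t w" using rlim_nonneg[OF rl1 elim(2) w] V1_nn w by blast
        then show "e2ennreal (- ereal (rlim V1 t w)) = 0" by (simp add: ennreal_neg)
      qed
      then show ?thesis by simp
    qed
    have "gen_exp M (\<lambda>\<omega>. ereal (rlim V1 t \<omega>)) = enn2ereal (b t)"
      unfolding gen_exp_def b_def z by (simp add: zero_ennreal.rep_eq)
    then have "enn2ereal (b t) < enn2ereal (ennreal e)" using elim(1) e by simp
    then show ?case by (simp add: less_ennreal.rep_eq)
  qed
qed

lemma u_G:
  assumes t: "0 \<le> t"
  shows "u t \<le> G t"
proof (rule ennreal_le_epsilon)
  fix e :: real assume e: "0 < e"
  obtain T0 where T0: "\<And>T. T \<ge> T0 \<Longrightarrow> b T < ennreal e"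
    using b_small[OF e] unfolding eventually_at_top_linorder by blast
  have "u t \<le> b (max t T0) + G t" by (rule u_le[OF t]) simp
  also have "\<dots> \<le> ennreal e + G t" using T0[of "max t T0"] by (intro add_right_mono) simp
  finally show "u t \<le> G t + ennreal e" by (simp add: ac_simps)
qed

lemma u_zero:
  assumes cA: "conditionA M F R S C V1 V2" and t: "0 \<le> t"
  shows "u t = 0"
proof -
  obtain B where B: "\<forall>t\<ge>0. (\<integral>\<^sup>+\<omega>. ennreal (max 0 (V1 t \<omega> - V2 t \<omega>)) \<partial>M) \<le> ennreal B"
    using cA unfolding conditionA_def by blast
  define c where "c = (theta R S - 1) * K powr (1 / theta R S)"
  define \<delta> where "\<delta> = g / theta R S"
  have th: "1 < theta R S" using par unfolding EZ_params_def by simp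
  have c0: "0 \<le> c" unfolding c_def using th by simp
  have d0: "0 < \<delta>" unfolding \<delta>_def using th gp by simp
  have ellc: "\<And>s. ell R S K g s = c * exp (- \<delta> * s)" unfolding ell_def c_def \<delta>_def by simp
  show ?thesis
  proof (rule gronwall_tail[OF d0 c0 _ _ _ t, of "max B 0"])
    show "0 \<le> max B 0" by simp
    fix t :: real assume t: "0 \<le> t"
    have "u t \<le> ennreal B" using B t unfolding u_def Dp_def by simp
    also have "\<dots> \<le> ennreal (max B 0)" by (intro ennreal_leI) simp
    finally show "u t \<le> ennreal (max B 0)" .
    show "u t \<le> (\<integral>\<^sup>+ s. ennreal (c * exp (- \<delta> * s)) * u s * indicator {t..} s \<partial>lborel)"
      using u_G[OF t] unfolding G_def ellc .
  qed
qed

end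


context EZset begin

lemma G0: assumes cA: "conditionA M F R S C V1 V2" shows "G 0 = 0"
proof -
  have z: "\<And>s::real. ennreal (ell R S K g s) * u s * indicator {0..} s = 0"
  proof -
    fix s :: real
    show "ennreal (ell R S K g s) * u s * indicator {0..} s = 0"
      by (cases "0 \<le> s") (simp_all add: u_zero[OF cA])
  qed
  show ?thesis unfolding G_def z by simp
qed

lemma bounded_case:
  assumes cA: "conditionA M F R S C V1 V2" and st: "stopping_time_on M F \<sigma>"
    and n: "\<forall>w\<in>space M. \<sigma> w \<le> N"
  shows "AE w in M. V1 (\<sigma> w) w \<le> V2 (\<sigma> w) w"
proof -
  have sm[measurable]: "\<sigma> \<in> borel_measurable M" by (rule stopping_time_measurable[OF filt st])
  have s0: "\<And>w. w \<in> space M \<Longrightarrow> 0 \<le> \<sigma> w" using st unfolding stopping_time_on_def by simp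
  have [measurable]: "(\<lambda>w. V1 (\<sigma> w) w) \<in> borel_measurable M" by (rule optional_at_rv[OF filt opt1 sm s0])
  have [measurable]: "(\<lambda>w. V2 (\<sigma> w) w) \<in> borel_measurable M" by (rule optional_at_rv[OF filt opt2 sm s0])
  have Dm: "(\<lambda>w. ennreal (Dp (\<sigma> w) w)) \<in> borel_measurable M" unfolding Dp_def by measurable
  have "(\<integral>\<^sup>+w. ennreal (Dp (\<sigma> w) w) \<partial>M) \<le> 0"
  proof (rule ennreal_le_epsilon)
    fix e :: real assume e: "0 < e"
    obtain T0 where T0: "\<And>T. T \<ge> T0 \<Longrightarrow> b T < ennreal e"
      using b_small[OF e] unfolding eventually_at_top_linorder by blast
    define T where "T = max (max T0 N) 0"
    have T: "0 \<le> T" "T0 \<le> T" "N \<le> T" unfolding T_def by auto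
    have le: "\<forall>w\<in>space M. \<sigma> w \<le> T" using n T by force
    have "(\<integral>\<^sup>+w. ennreal (Dp (\<sigma> w) w) \<partial>M)
       \<le> (\<integral>\<^sup>+w. ennreal (max 0 (rlim V1 T w - rlim V2 T w)) \<partial>M) + (\<integral>\<^sup>+w. Jj \<sigma> T w \<partial>M)"
      by (rule step[OF st T(1) le])
    also have "\<dots> \<le> b T + G 0"
      unfolding G_def by (intro add_mono a_le_b[OF T(1)] J_bound[OF T(1)]) (use s0 in auto)
    also have "\<dots> \<le> ennreal e" using T0[OF T(2)] G0[OF cA] by simp
    finally show "(\<integral>\<^sup>+w. ennreal (Dp (\<sigma> w) w) \<partial>M) \<le> 0 + ennreal e" by simp
  qed
  then have "(\<integral>\<^sup>+w. ennreal (Dp (\<sigma> w) w) \<partial>M) = 0" by simp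
  then have "AE w in M. ennreal (Dp (\<sigma> w) w) = 0" using nn_integral_0_iff_AE[OF Dm] by simp
  then show ?thesis by eventually_elim (simp add: Dp_def ennreal_eq_0_iff)
qed

lemma final:
  assumes cA: "conditionA M F R S C V1 V2" and st: "stopping_time_on M F \<sigma>"
  shows "AE w in M. V1 (\<sigma> w) w \<le> V2 (\<sigma> w) w"
proof -
  have "AE w in M. V1 (min (\<sigma> w) (real n)) w \<le> V2 (min (\<sigma> w) (real n)) w" for n :: nat
  proof (rule bounded_case[OF cA, of _ "real n"])
    show "stopping_time_on M F (\<lambda>w. min (\<sigma> w) (real n))"
      unfolding stopping_time_on_def
    proof safe
      fix w assume "w \<in> space M" then show "0 \<le> min (\<sigma> w) (real n)" using st unfolding stopping_time_on_def by simp
    next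
      fix t :: real assume t: "0 \<le> t"
      have sp: "space (F t) = space M" using filt t unfolding filtration_on_def by simp
      show "{w \<in> space M. min (\<sigma> w) (real n) \<le> t} \<in> sets (F t)"
      proof (cases "real n \<le> t")
        case True
        then have "{w \<in> space M. min (\<sigma> w) (real n) \<le> t} = space (F t)" using sp by auto
        then show ?thesis by simp
      next
        case False
        then have "{w \<in> space M. min (\<sigma> w) (real n) \<le> t} = {w \<in> space M. \<sigma> w \<le> t}" by auto
        then show ?thesis using st t unfolding stopping_time_on_def by simp
      qed
    qed
  qed simp
  then have "AE w in M. \<forall>n::nat. V1 (min (\<sigma> w) (real n)) w \<le> V2 (min (\<sigma> w) (real n)) w"
    by (simp add: AE_all_countable)
  then show ?thesis
  proof eventually_elim
    case (elim w)
    have "min (\<sigma> w) (real (nat \<lceil>\<sigma> w\<rceil>)) = \<sigma> w" using real_nat_ceiling_ge[of "\<sigma> w"] by simp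
    then show ?case using elim[rule_format, of "nat \<lceil>\<sigma> w\<rceil>"] by simp
  qed
qed

end

theorem corollary5p6:
  fixes M :: "'a measure" and F :: "real \<Rightarrow> 'a measure"
    and R S K \<gamma> :: real and C V1 V2 :: "real \<Rightarrow> 'a \<Rightarrow> real"
  assumes "std_filtered_space M F"
    and "EZ_params R S"
    and "R < 1"
    and "progressive_nonneg M F C"
    and "subsolution M F R S C V1"
    and "supersolution M F R S C V2"
    and "\<forall>t\<ge>0. \<forall>\<omega>\<in>space M. 0 < V2 t \<omega>"
    and "conditionA M F R S C V1 V2"
    and "0 < K" and "0 < \<gamma>"
    and "\<forall>t\<ge>0. \<forall>\<omega>\<in>space M. C t \<omega> powr (1 - R) \<le> K * exp (- \<gamma> * t) * ((1 - R) * V2 t \<omega>)"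
  shows "\<forall>\<sigma>. stopping_time_on M F \<sigma> \<longrightarrow> (AE \<omega> in M. V1 (\<sigma> \<omega>) \<omega> \<le> V2 (\<sigma> \<omega>) \<omega>)"
proof -
  interpret EZset M F R S K \<gamma> C V1 V2
    using assms by unfold_locales auto
  show ?thesis using final assms(8) by blast
qed

end
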